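(* Let $T$ be a rooted binary tree with black/white-coloured leaves and the induced node colouring and classification as described in the context, and suppose $T$ contains more than one maximal black subtree. Then no SPR operation on $T$ belonging to the class $(\mathrm{W},\mathrm{b},\mathrm{B},\ast)$, $(\mathrm{W},\mathrm{b},\mathrm{W},\ast)$ or $(\mathrm{W},\mathrm{b},\mathrm{G},\ast)$ produces a compatible tree.
   Context: All trees are rooted binary trees; every non-leaf node has exactly two children and every non-root node $n$ has a parent $\mathrm{pa}(n)$. A "subtree" always means a node together with all of its descendants. Colouring: each leaf is coloured black (B) or white (W); an internal node is black if both children are black, white if both children are white, and grey (G) otherwise. A subtree is black (resp. white) if all its nodes are black (resp. white); it is maximal if no strictly larger subtree containing it is black (resp. white). Classification: a black or white node is of type "r" if it is the root of a maximal subtree of its own colour, and of type "b" otherwise; all grey nodes are of type "b" by convention. A tree is compatible if it contains at most one maximal black subtree. SPR operation $(u,v)$ on $T$: $u$ is a non-root node, $v$ is a node with $v\notin\{u,\mathrm{pa}(u)\}$ and $v$ not a descendant of $u$; the subtree rooted at $u$ is pruned (the edge to $u$ is removed and $\mathrm{pa}(u)$ deleted, its other child taking its place), then regrafted by inserting a new node on the edge from $v$ to its parent (or as a new root above $v$ if $v$ is the root) whose two children are $v$ and $u$; colours of the resulting tree are recomputed by the same rule. The operation belongs to class $(x,y,z,w)$ where $x,z\in\{\mathrm{B},\mathrm{W},\mathrm{G}\}$ are the colours in $T$ of $u$ and $v$, and $y,w\in\{\mathrm{r},\mathrm{b}\}$ their classifications in $T$; $\ast$ denotes any value. *)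

theory Defs
  imports Main "HOL-Library.Sublist"
begin

text \<open>Rooted binary trees with black (True) / white (False) coloured leaves.
Nodes are addressed by their path from the root (False = left child, True = right child).\<close>

datatype tree = Leaf bool | Node tree tree

datatype col = Bl | Wh | Gr

datatype cls = Cr | Cb

fun positions :: "tree \<Rightarrow> bool list set" where
  "positions (Leaf c) = {[]}"
| "positions (Node l r) = {[]} \<union> Cons False ` positions l \<union> Cons True ` positions r"

fun subtree :: "tree \<Rightarrow> bool list \<Rightarrow> tree" where
  "subtree t [] = t"
| "subtree (Node l r) (False # p) = subtree l p"
| "subtree (Node l r) (True # p) = subtree r p"
| "subtree (Leaf c) (_ # p) = Leaf c"

fun replace :: "tree \<Rightarrow> bool list \<Rightarrow> tree \<Rightarrow> tree" where
  "replace t [] s = s"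
| "replace (Node l r) (False # p) s = Node (replace l p s) r"
| "replace (Node l r) (True # p) s = Node l (replace r p s)"
| "replace (Leaf c) (_ # p) s = Leaf c"

fun colour :: "tree \<Rightarrow> col" where
  "colour (Leaf c) = (if c then Bl else Wh)"
| "colour (Node l r) =
     (if colour l = Bl \<and> colour r = Bl then Bl
      else if colour l = Wh \<and> colour r = Wh then Wh else Gr)"

definition col_at :: "tree \<Rightarrow> bool list \<Rightarrow> col" where
  "col_at t p = colour (subtree t p)"

definition mono_subtree :: "tree \<Rightarrow> bool list \<Rightarrow> col \<Rightarrow> bool" where
  "mono_subtree t p c \<longleftrightarrow> p \<in> positions t \<and>
     (\<forall>q. p @ q \<in> positions t \<longrightarrow> col_at t (p @ q) = c)"

definition maximal_subtree :: "tree \<Rightarrow> bool list \<Rightarrow> col \<Rightarrow> bool" where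
  "maximal_subtree t p c \<longleftrightarrow> mono_subtree t p c \<and>
     (\<forall>q. strict_prefix q p \<longrightarrow> \<not> mono_subtree t q c)"

definition classify :: "tree \<Rightarrow> bool list \<Rightarrow> cls" where
  "classify t p = (if (col_at t p = Bl \<or> col_at t p = Wh) \<and> maximal_subtree t p (col_at t p)
                   then Cr else Cb)"

definition num_max_black :: "tree \<Rightarrow> nat" where
  "num_max_black t = card {p. maximal_subtree t p Bl}"

definition compatible :: "tree \<Rightarrow> bool" where
  "compatible t \<longleftrightarrow> num_max_black t \<le> 1"

definition spr_valid :: "tree \<Rightarrow> bool list \<Rightarrow> bool list \<Rightarrow> bool" where
  "spr_valid t u v \<longleftrightarrow> u \<in> positions t \<and> u \<noteq> [] \<and> v \<in> positions t \<and>
     v \<noteq> u \<and> v \<noteq> butlast u \<and> \<not> prefix u v"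

text \<open>Result of SPR (u,v): prune the subtree at u (the sibling of u replaces its parent),
then regraft it on the edge above v (new node with children v and u).\<close>
definition spr :: "tree \<Rightarrow> bool list \<Rightarrow> bool list \<Rightarrow> tree" where
  "spr t u v =
    (let pa = butlast u; sib = pa @ [\<not> last u];
         t' = replace t pa (subtree t sib);
         v' = (if prefix sib v then pa @ drop (length sib) v else v)
     in replace t' v' (Node (subtree t' v') (subtree t u)))"

end

theory Submission
  imports Defs
begin

fun mbs :: "tree \<Rightarrow> bool list set" where
  "mbs (Leaf c) = (if c then {[]} else {})"
| "mbs (Node l r) = (if colour (Node l r) = Bl then {[]}
     else Cons False ` mbs l \<union> Cons True ` mbs r)"

lemma mbs_finite: "finite (mbs t)"
  by (induction t) auto

definition mb :: "tree \<Rightarrow> nat" where "mb t = card (mbs t)"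

lemma mb_Leaf: "mb (Leaf c) = (if c then 1 else 0)"
  by (simp add: mb_def)

lemma mb_Node: "mb (Node l r) = (if colour (Node l r) = Bl then 1 else mb l + mb r)"
proof (cases "colour (Node l r) = Bl")
  case True then show ?thesis by (simp add: mb_def del: colour.simps)
next
  case False
  have "card (Cons False ` mbs l \<union> Cons True ` mbs r) = card (Cons False ` mbs l) + card (Cons True ` mbs r)"
    by (rule card_Un_disjoint) (auto simp: mbs_finite)
  also have "\<dots> = mb l + mb r" by (simp add: mb_def card_image)
  finally show ?thesis using False by (simp add: mb_def del: colour.simps)
qed

lemma subtree_Leaf: "subtree (Leaf c) q = Leaf c"
  by (cases q) auto

lemma subtree_append: "subtree t (p @ q) = subtree (subtree t p) q"
  by (induction t p rule: subtree.induct) (auto simp: subtree_Leaf)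

lemma colour_down: "c \<noteq> Gr \<Longrightarrow> colour x = c \<Longrightarrow> colour (subtree x q) = c"
proof (induction x q rule: subtree.induct)
  case (2 l r p) then show ?case by (auto split: if_splits)
next
  case (3 l r p) then show ?case by (auto split: if_splits)
qed auto

lemma colour_down2: "c \<noteq> Gr \<Longrightarrow> colour (subtree t p) = c \<Longrightarrow> colour (subtree t (p @ q)) = c"
  using colour_down subtree_append by metis

lemma positions_prefix: "p @ r \<in> positions t \<Longrightarrow> p \<in> positions t"
proof (induction t arbitrary: p)
  case (Leaf x) then show ?case by auto
next
  case (Node l r')
  then show ?case by (cases p) auto
qed

lemma mono_iff: "c \<noteq> Gr \<Longrightarrow> mono_subtree t p c \<longleftrightarrow> p \<in> positions t \<and> colour (subtree t p) = c"
  unfolding mono_subtree_def col_at_def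
  by (metis append_Nil2 colour_down2)

definition maxc where "maxc t p \<longleftrightarrow> p \<in> positions t \<and> colour (subtree t p) = Bl \<and>
   (\<forall>q. strict_prefix q p \<longrightarrow> colour (subtree t q) \<noteq> Bl)"

lemma max_iff: "maximal_subtree t p Bl \<longleftrightarrow> maxc t p"
  unfolding maximal_subtree_def maxc_def
  using mono_iff[of Bl t] positions_prefix
  by (metis col.distinct(3) prefixE strict_prefix_def)

lemma maxc_mbs: "maxc t p \<longleftrightarrow> p \<in> mbs t"
proof (induction t arbitrary: p)
  case (Leaf c)
  then show ?case unfolding maxc_def by (auto simp: strict_prefix_def)
next
  case (Node l r)
  show ?case
  proof (cases p)
    case Nil
    then show ?thesis unfolding maxc_def by (auto simp del: colour.simps)
  next
    case (Cons b p')
    have sp: "strict_prefix q (b # p') \<longleftrightarrow> q = [] \<or> (\<exists>q'. q = b # q' \<and> strict_prefix q' p')" for q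
      by (cases q) auto
    have "maxc (Node l r) (b # p') \<longleftrightarrow> colour (Node l r) \<noteq> Bl \<and> maxc (if b then r else l) p'"
      unfolding maxc_def sp by (cases b) (auto simp del: colour.simps)
    then show ?thesis using Cons Node.IH by (cases b) (auto simp del: colour.simps)
  qed
qed

lemma num_mb: "num_max_black t = mb t"
  unfolding num_max_black_def mb_def using max_iff maxc_mbs by auto

lemma colour_Bl_mb: "colour x = Bl \<Longrightarrow> mb x = 1"
  by (cases x) (auto simp: mb_Leaf mb_Node split: if_splits)

lemma colour_Wh_mb: "colour x = Wh \<Longrightarrow> mb x = 0"
proof (induction x)
  case (Leaf x) then show ?case by (auto simp: mb_Leaf split: if_splits)
next
  case (Node x1 x2) then show ?case by (auto simp: mb_Node split: if_splits)
qed

lemma replace_colour: "colour s = colour (subtree t p) \<Longrightarrow> colour (replace t p s) = colour t"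
  by (induction t p s rule: replace.induct) auto

lemma replace_eq: "colour s = colour (subtree t p) \<Longrightarrow> mb s = mb (subtree t p) \<Longrightarrow>
   mb (replace t p s) = mb t"
proof (induction t p s rule: replace.induct)
  case (2 l r p s)
  then show ?case using replace_colour[of s l p]
    by (simp add: mb_Node del: colour.simps) (simp)
next
  case (3 l r p s)
  then show ?case using replace_colour[of s r p]
    by (simp add: mb_Node del: colour.simps) (simp)
qed auto

lemma replace_blk: "(colour s = Bl \<Longrightarrow> colour (subtree t p) = Bl) \<Longrightarrow>
   colour (replace t p s) = Bl \<Longrightarrow> colour t = Bl"
  by (induction t p s rule: replace.induct) (auto split: if_splits)

lemma replace_ge: "(colour s = Bl \<Longrightarrow> colour (subtree t p) = Bl) \<Longrightarrow> mb s \<ge> mb (subtree t p) \<Longrightarrow>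
   mb (replace t p s) \<ge> mb t"
proof (induction t p s rule: replace.induct)
  case (2 l r p s)
  have IH: "mb (replace l p s) \<ge> mb l" using 2 by simp
  have b: "colour (replace l p s) = Bl \<Longrightarrow> colour l = Bl" using 2(2) replace_blk[of s l p] by simp
  show ?case
  proof (cases "colour (Node l r) = Bl")
    case True
    then have "colour l = Bl" "colour r = Bl" by (auto split: if_splits)
    then show ?thesis using True IH colour_Bl_mb[of l] colour_Bl_mb[of r]
      by (simp add: mb_Node[of "replace l p s"] mb_Node[of l] del: colour.simps)
  next
    case False
    then have "colour (Node (replace l p s) r) \<noteq> Bl" using b by (auto split: if_splits)
    then show ?thesis using IH False
      by (simp add: mb_Node[of "replace l p s"] mb_Node[of l] del: colour.simps)
  qed
next
  case (3 l r p s)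
  have IH: "mb (replace r p s) \<ge> mb r" using 3 by simp
  have b: "colour (replace r p s) = Bl \<Longrightarrow> colour r = Bl" using 3(2) replace_blk[of s r p] by simp
  show ?case
  proof (cases "colour (Node l r) = Bl")
    case True
    then have "colour l = Bl" "colour r = Bl" by (auto split: if_splits)
    then show ?thesis using True IH colour_Bl_mb[of l] colour_Bl_mb[of r]
      by (simp add: mb_Node[of l "replace r p s"] mb_Node[of l r] del: colour.simps)
  next
    case False
    then have "colour (Node l (replace r p s)) \<noteq> Bl" using b by (auto split: if_splits)
    then show ?thesis using IH False
      by (simp add: mb_Node[of l "replace r p s"] mb_Node[of l r] del: colour.simps)
  qed
qed auto

theorem lemma4:
  fixes T :: tree and u v :: "bool list"
  assumes "num_max_black T > 1"
    and "spr_valid T u v"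
    and "col_at T u = Wh" and "classify T u = Cb"
    and "col_at T v = Bl \<or> col_at T v = Wh \<or> col_at T v = Gr"
  shows "\<not> compatible (spr T u v)"
proof -
  have u0: "u \<noteq> []" "u \<in> positions T" using assms(2) by (auto simp: spr_valid_def)
  have "mono_subtree T u Wh" using mono_iff[of Wh T u] u0 assms(3) by (simp add: col_at_def)
  then obtain q where q: "strict_prefix q u" "mono_subtree T q Wh"
    using assms(3,4) unfolding classify_def maximal_subtree_def by (auto split: if_splits)
  have cq: "colour (subtree T q) = Wh" using q(2) mono_iff[of Wh T q] by simp
  define pa where "pa = butlast u"
  define sib where "sib = pa @ [\<not> last u]"
  have "prefix q pa" using q(1) unfolding pa_def
    by (metis butlast_append prefixE prefix_order.le_less strict_prefix_def append_self_conv prefix_def)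
  then obtain r where pr: "pa = q @ r" by (auto simp: prefix_def)
  have cpa: "colour (subtree T pa) = Wh" using colour_down2[OF _ cq] pr by simp
  have csib: "colour (subtree T sib) = Wh" using colour_down2[OF _ cpa] sib_def by simp
  define t' where "t' = replace T pa (subtree T sib)"
  have "mb t' = mb T" unfolding t'_def
    by (rule replace_eq) (use cpa csib colour_Wh_mb in auto)
  define v' where "v' = (if prefix sib v then pa @ drop (length sib) v else v)"
  have cu: "colour (subtree T u) = Wh" using assms(3) by (simp add: col_at_def)
  have sp: "spr T u v = replace t' v' (Node (subtree t' v') (subtree T u))"
    unfolding spr_def Let_def t'_def v'_def sib_def pa_def by simp
  have "mb (replace t' v' (Node (subtree t' v') (subtree T u))) \<ge> mb t'"
    by (rule replace_ge) (use cu colour_Wh_mb in \<open>auto simp: mb_Node split: if_splits\<close>)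
  then show ?thesis using assms(1) \<open>mb t' = mb T\<close> sp
    by (simp add: compatible_def num_mb)
qed

end
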